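(* Let $G$ be a connected graph with $n\ge 4$ vertices and $m=e(G)\ge n$ edges. If $R(G)>\sqrt{n-1}+\frac{2m-2n+2}{n\sqrt{n-1}}$, then $\frac{q(G)}{R(G)}<\frac{n}{\sqrt{n-1}}$.
   Context: All graphs are finite and simple; $e(G)$ is the number of edges. For a vertex $u$, $d(u)$ is its degree. The Randić index is $R(G)=\sum_{\{u,v\}\in E(G)} \frac{1}{\sqrt{d(u)d(v)}}$. The signless Laplacian is $Q=D+A$ ($D$ the diagonal degree matrix, $A$ the adjacency matrix), and $q(G)$ is its largest eigenvalue. *)

theory Defs
  imports Complex_Main
begin

definition simple_graph :: "'a set \<Rightarrow> ('a \<Rightarrow> 'a \<Rightarrow> bool) \<Rightarrow> bool" where
  "simple_graph V E \<longleftrightarrow> finite V \<and> (\<forall>u v. E u v \<longrightarrow> u \<in> V \<and> v \<in> V)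
     \<and> (\<forall>u v. E u v \<longrightarrow> E v u) \<and> (\<forall>u. \<not> E u u)"

definition connected_graph :: "'a set \<Rightarrow> ('a \<Rightarrow> 'a \<Rightarrow> bool) \<Rightarrow> bool" where
  "connected_graph V E \<longleftrightarrow> V \<noteq> {} \<and> (\<forall>u\<in>V. \<forall>v\<in>V. E\<^sup>*\<^sup>* u v)"

definition edges :: "'a set \<Rightarrow> ('a \<Rightarrow> 'a \<Rightarrow> bool) \<Rightarrow> 'a set set" where
  "edges V E = {{u, v} | u v. u \<in> V \<and> v \<in> V \<and> E u v}"

definition num_edges :: "'a set \<Rightarrow> ('a \<Rightarrow> 'a \<Rightarrow> bool) \<Rightarrow> nat" where
  "num_edges V E = card (edges V E)"

definition degree :: "'a set \<Rightarrow> ('a \<Rightarrow> 'a \<Rightarrow> bool) \<Rightarrow> 'a \<Rightarrow> nat" where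
  "degree V E u = card {v \<in> V. E u v}"

definition randic :: "'a set \<Rightarrow> ('a \<Rightarrow> 'a \<Rightarrow> bool) \<Rightarrow> real" where
  "randic V E = (\<Sum>e\<in>edges V E. 1 / sqrt (\<Prod>w\<in>e. real (degree V E w)))"

text \<open>Eigenvalues of the signless Laplacian Q = D + A, viewed as a linear map on
real functions on V: (Q x)(u) = d(u) x(u) + sum of x(v) over neighbours v of u.\<close>
definition signless_laplacian_eigenvalue :: "'a set \<Rightarrow> ('a \<Rightarrow> 'a \<Rightarrow> bool) \<Rightarrow> real \<Rightarrow> bool" where
  "signless_laplacian_eigenvalue V E mu \<longleftrightarrow>
     (\<exists>x :: 'a \<Rightarrow> real. (\<exists>u\<in>V. x u \<noteq> 0) \<and>
        (\<forall>u\<in>V. real (degree V E u) * x u + (\<Sum>v\<in>{w\<in>V. E u w}. x v) = mu * x u))"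

text \<open>q(G): the largest eigenvalue of Q (Q is real symmetric, so all eigenvalues are real).\<close>
definition signless_spectral_radius :: "'a set \<Rightarrow> ('a \<Rightarrow> 'a \<Rightarrow> bool) \<Rightarrow> real" where
  "signless_spectral_radius V E = Max {mu. signless_laplacian_eigenvalue V E mu}"

end

theory Submission
  imports Defs "Jordan_Normal_Form.Char_Poly"
begin


lemma edges_finite: assumes "simple_graph V E" shows "finite (edges V E)"
proof -
  have "edges V E \<subseteq> Pow V" unfolding edges_def by auto
  moreover have "finite V" using assms unfolding simple_graph_def by auto
  ultimately show ?thesis by (meson finite_Pow_iff finite_subset)
qed

lemma edge_card2: assumes "simple_graph V E" "e \<in> edges V E" shows "card e = 2"
  using assms unfolding edges_def simple_graph_def by (auto simp: card_insert_if)

lemma edges_sub: assumes "e \<in> edges V E" shows "e \<subseteq> V"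
  using assms unfolding edges_def by auto

lemma degree_edges: assumes sg: "simple_graph V E" and u: "u \<in> V"
  shows "card {e \<in> edges V E. u \<in> e} = Defs.degree V E u"
proof -
  have "bij_betw (\<lambda>v. {u, v}) {v \<in> V. E u v} {e \<in> edges V E. u \<in> e}"
  proof (rule bij_betwI')
    fix x y assume "x \<in> {v \<in> V. E u v}" "y \<in> {v \<in> V. E u v}"
    then show "({u, x} = {u, y}) = (x = y)" using sg unfolding simple_graph_def
      by (metis doubleton_eq_iff)
  next
    fix x assume "x \<in> {v \<in> V. E u v}" then show "{u, x} \<in> {e \<in> edges V E. u \<in> e}"
      using u unfolding edges_def by auto
  next
    fix e assume "e \<in> {e \<in> edges V E. u \<in> e}"
    then obtain a b where e: "e = {a,b}" "a \<in> V" "b \<in> V" "E a b" "u \<in> e" unfolding edges_def by auto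
    show "\<exists>x\<in>{v \<in> V. E u v}. e = {u, x}"
    proof (cases "u = a")
      case True then show ?thesis using e by auto
    next
      case False then have "u = b" using e by auto
      moreover have "E b a" "a \<in> V" using e sg unfolding simple_graph_def by auto
      ultimately show ?thesis using e by (intro bexI[of _ a]) (auto simp: insert_commute)
    qed
  qed
  then show ?thesis unfolding Defs.degree_def by (simp add: bij_betw_same_card)
qed

lemma handshake: assumes sg: "simple_graph V E"
  shows "(\<Sum>u\<in>V. Defs.degree V E u) = 2 * num_edges V E"
proof -
  have fV: "finite V" using sg unfolding simple_graph_def by auto
  have fE: "finite (edges V E)" using edges_finite[OF sg] .
  have "(\<Sum>e\<in>edges V E. card e) = 2 * num_edges V E"
    unfolding num_edges_def using edge_card2[OF sg] by simp
  moreover have "(\<Sum>e\<in>edges V E. card e) = (\<Sum>e\<in>edges V E. \<Sum>u\<in>V. if u \<in> e then 1 else 0)"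
  proof (rule sum.cong)
    fix e assume "e \<in> edges V E"
    then have "e \<subseteq> V" by (rule edges_sub)
    then have "V \<inter> {u. u \<in> e} = e" by auto
    then show "card e = (\<Sum>u\<in>V. if u \<in> e then 1 else 0)"
      using fV by (simp add: sum.If_cases)
  qed simp
  moreover have "\<dots> = (\<Sum>u\<in>V. \<Sum>e\<in>edges V E. if u \<in> e then 1 else 0)" by (rule sum.swap)
  moreover have "\<dots> = (\<Sum>u\<in>V. Defs.degree V E u)"
  proof (rule sum.cong)
    fix u assume u: "u \<in> V"
    have "(\<Sum>e\<in>edges V E. if u \<in> e then 1 else 0) = card (edges V E \<inter> {e. u \<in> e})"
      using fE by (simp add: sum.If_cases)
    also have "edges V E \<inter> {e. u \<in> e} = {e \<in> edges V E. u \<in> e}" by auto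
    finally show "(\<Sum>e\<in>edges V E. if u \<in> e then 1 else 0) = Defs.degree V E u"
      using degree_edges[OF sg u] by simp
  qed simp
  ultimately show ?thesis by simp
qed

lemma arith_key:
  fixes d S c mu k :: real
  assumes "1 \<le> d" "d \<le> k" "S \<le> d * k" "S \<le> c" "mu * d \<le> d^2 + S"
  shows "mu \<le> c / k + k"
proof -
  have k: "k > 0" using assms by auto
  have m: "mu \<le> d + S / d" using assms by (simp add: field_simps power2_eq_square)
  show ?thesis
  proof (cases "d * k \<le> c")
    case True
    have "S / d \<le> k" using assms by (simp add: divide_le_eq mult.commute)
    moreover have "d \<le> c / k" using True k by (simp add: le_divide_eq)
    ultimately show ?thesis using m by linarith
  next
    case False
    have "S / d \<le> c / d" using assms by (simp add: divide_right_mono)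
    moreover have "d + c / d \<le> c / k + k"
    proof -
      have "(d * k - c) * (d - k) \<le> 0" using False assms
        by (simp add: mult_nonneg_nonpos)
      then have "d * d * k + c * k \<le> c * d + k * k * d" by (simp add: algebra_simps)
      then have "(d * d * k + c * k) / (d * k) \<le> (c * d + k * k * d) / (d * k)"
        using k assms by (simp add: divide_right_mono)
      moreover have "d + c / d = (d * d * k + c * k) / (d * k)" using k assms by (simp add: field_simps)
      moreover have "c / k + k = (c * d + k * k * d) / (d * k)" using k assms by (simp add: field_simps)
      ultimately show ?thesis by simp
    qed
    ultimately show ?thesis using m by linarith
  qed
qed



lemma deg_bounds: assumes sg: "simple_graph V E" and cg: "connected_graph V E"
  and n: "card V \<ge> 2" and u: "u \<in> V"
  shows "1 \<le> Defs.degree V E u" "Defs.degree V E u \<le> card V - 1"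
proof -
  have fV: "finite V" using sg unfolding simple_graph_def by auto
  have sub: "{v \<in> V. E u v} \<subseteq> V - {u}" using sg unfolding simple_graph_def by auto
  then have "card {v \<in> V. E u v} \<le> card (V - {u})" using fV by (intro card_mono) auto
  then show "Defs.degree V E u \<le> card V - 1" unfolding Defs.degree_def using u fV by simp
  have "card (V - {u}) = card V - 1" using u fV by (simp add: card_Diff_singleton)
  then have "card (V - {u}) > 0" using n by simp
  then have "V - {u} \<noteq> {}" by (metis card.empty less_irrefl)
  then obtain v where v: "v \<in> V" "v \<noteq> u" by auto
  have "E\<^sup>*\<^sup>* u v" using cg u v unfolding connected_graph_def by auto
  then obtain w where "E u w" using v(2) by (metis converse_rtranclpE)
  then have "w \<in> {v \<in> V. E u v}" using sg unfolding simple_graph_def by auto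
  then have "{v \<in> V. E u v} \<noteq> {}" by auto
  then show "1 \<le> Defs.degree V E u" unfolding Defs.degree_def using fV
    by (simp add: Suc_leI card_gt_0_iff)
qed

lemma eig_bound: assumes sg: "simple_graph V E" and cg: "connected_graph V E"
  and n: "card V \<ge> 2" and ev: "signless_laplacian_eigenvalue V E mu"
  shows "mu \<le> (2 * real (num_edges V E) - real (card V) + 1) / (real (card V) - 1) + (real (card V) - 1)"
proof -
  define d where "d = (\<lambda>w. real (Defs.degree V E w))"
  define N where "N = (\<lambda>w. {v \<in> V. E w v})"
  have fV: "finite V" using sg unfolding simple_graph_def by auto
  have d1: "\<And>w. w \<in> V \<Longrightarrow> 1 \<le> d w" using deg_bounds[OF sg cg n] unfolding d_def by simp
  have dn: "\<And>w. w \<in> V \<Longrightarrow> d w \<le> real (card V) - 1"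
  proof -
    fix w assume w: "w \<in> V"
    have "real (Defs.degree V E w) \<le> real (card V - 1)" using deg_bounds(2)[OF sg cg n w] by linarith
    then show "d w \<le> real (card V) - 1" using n unfolding d_def by (simp add: of_nat_diff)
  qed
  obtain x where x0: "\<exists>u\<in>V. x u \<noteq> 0"
    and xe: "\<And>u. u \<in> V \<Longrightarrow> d u * x u + (\<Sum>v\<in>N u. x v) = mu * x u"
    using ev unfolding signless_laplacian_eigenvalue_def d_def N_def by blast
  define y where "y = (\<lambda>w. x w / d w)"
  have xy: "\<And>w. w \<in> V \<Longrightarrow> x w = d w * y w" using d1 unfolding y_def
    by (metis div_by_1 nonzero_mult_div_cancel_left not_one_le_zero times_divide_eq_right)
  define M where "M = Max ((\<lambda>w. \<bar>y w\<bar>) ` V)"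
  have Vne: "V \<noteq> {}" using n by auto
  have "M \<in> (\<lambda>w. \<bar>y w\<bar>) ` V" unfolding M_def using fV Vne by (intro Max_in) auto
  then obtain u where u: "u \<in> V" "\<bar>y u\<bar> = M" by auto
  have Mge: "\<And>w. w \<in> V \<Longrightarrow> \<bar>y w\<bar> \<le> \<bar>y u\<bar>" using u fV unfolding M_def by auto
  obtain w0 where w0: "w0 \<in> V" "x w0 \<noteq> 0" using x0 by auto
  have "y w0 \<noteq> 0" using xy[OF w0(1)] w0 by auto
  then have ypos: "\<bar>y u\<bar> > 0" using Mge[OF w0(1)] by linarith
  define S where "S = (\<Sum>v\<in>N u. d v)"
  have NV: "N u \<subseteq> V" unfolding N_def by auto
  have fN: "finite (N u)" using fV NV finite_subset by blast
  have cardN: "real (card (N u)) = d u" unfolding d_def N_def Defs.degree_def by simp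
  have "\<bar>mu\<bar> * \<bar>x u\<bar> = \<bar>d u * x u + (\<Sum>v\<in>N u. x v)\<bar>" using xe[OF u(1)] by (simp add: abs_mult)
  also have "\<dots> \<le> \<bar>d u * x u\<bar> + \<bar>\<Sum>v\<in>N u. x v\<bar>" by (rule abs_triangle_ineq)
  also have "\<bar>\<Sum>v\<in>N u. x v\<bar> \<le> (\<Sum>v\<in>N u. \<bar>x v\<bar>)" by (rule sum_abs)
  also have "(\<Sum>v\<in>N u. \<bar>x v\<bar>) \<le> (\<Sum>v\<in>N u. d v * \<bar>y u\<bar>)"
  proof (rule sum_mono)
    fix v assume v: "v \<in> N u"
    then have "v \<in> V" using NV by auto
    then show "\<bar>x v\<bar> \<le> d v * \<bar>y u\<bar>" using xy[of v] Mge[of v] d1[of v]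
      by (simp add: abs_mult mult_left_mono)
  qed
  also have "(\<Sum>v\<in>N u. d v * \<bar>y u\<bar>) = S * \<bar>y u\<bar>" unfolding S_def by (simp add: sum_distrib_right)
  finally have "\<bar>mu\<bar> * \<bar>x u\<bar> \<le> \<bar>d u * x u\<bar> + S * \<bar>y u\<bar>" by simp
  then have "\<bar>mu\<bar> * (d u * \<bar>y u\<bar>) \<le> d u * (d u * \<bar>y u\<bar>) + S * \<bar>y u\<bar>"
    using xy[OF u(1)] d1[OF u(1)] by (simp add: abs_mult)
  then have "(\<bar>mu\<bar> * d u) * \<bar>y u\<bar> \<le> (d u ^ 2 + S) * \<bar>y u\<bar>"
    by (simp add: algebra_simps power2_eq_square)
  then have "\<bar>mu\<bar> * d u \<le> d u ^ 2 + S" using ypos by simp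
  moreover have "mu * d u \<le> \<bar>mu\<bar> * d u" using d1[OF u(1)] by (simp add: mult_right_mono)
  ultimately have key: "mu * d u \<le> d u ^ 2 + S" by linarith
  have S1: "S \<le> d u * (real (card V) - 1)"
  proof -
    have "S \<le> (\<Sum>v\<in>N u. real (card V) - 1)" unfolding S_def using dn NV by (intro sum_mono) auto
    then show ?thesis using cardN by simp
  qed
  have S2: "S \<le> 2 * real (num_edges V E) - real (card V) + 1"
  proof -
    define R where "R = V - N u - {u}"
    have uN: "u \<notin> N u" using sg unfolding N_def simple_graph_def by auto
    have Vsplit: "V = N u \<union> ({u} \<union> R)" using NV u unfolding R_def by auto
    have fR: "finite R" using fV unfolding R_def by auto
    have uR: "u \<notin> R" unfolding R_def by auto
    have "(\<Sum>w\<in>V. d w) = S + (d u + (\<Sum>w\<in>R. d w))"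
    proof -
      have "(\<Sum>w\<in>V. d w) = (\<Sum>w\<in>N u \<union> ({u} \<union> R). d w)" using Vsplit by simp
      also have "\<dots> = S + (\<Sum>w\<in>{u} \<union> R. d w)" unfolding S_def
        using fN fR uN by (intro sum.union_disjoint) (auto simp: R_def)
      also have "(\<Sum>w\<in>{u} \<union> R. d w) = d u + (\<Sum>w\<in>R. d w)"
        using fR uR by simp
      finally show ?thesis .
    qed
    moreover have "(\<Sum>w\<in>V. d w) = 2 * real (num_edges V E)"
      using handshake[OF sg] unfolding d_def by (metis of_nat_mult of_nat_numeral of_nat_sum)
    moreover have "(\<Sum>w\<in>R. d w) \<ge> (\<Sum>w\<in>R. 1)" using d1 unfolding R_def by (intro sum_mono) auto
    moreover have "real (card R) = real (card V) - 1 - d u"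
    proof -
      have "card V = card (N u) + (1 + card R)"
      proof -
        have "card V = card (N u \<union> ({u} \<union> R))" using Vsplit by simp
        also have "\<dots> = card (N u) + card ({u} \<union> R)"
          using fN fR uN by (intro card_Un_disjoint) (auto simp: R_def)
        also have "card ({u} \<union> R) = 1 + card R" using fR uR by simp
        finally show ?thesis .
      qed
      then show ?thesis using cardN by simp
    qed
    ultimately show ?thesis by simp
  qed
  show ?thesis
    by (rule arith_key[OF d1[OF u(1)] dn[OF u(1)] S1 S2 key])
qed



lemma nbr_swap: assumes sg: "simple_graph V E"
  shows "(\<Sum>u\<in>V. b u * (\<Sum>v\<in>{w\<in>V. E u w}. a v)) = (\<Sum>u\<in>V. a u * (\<Sum>v\<in>{w\<in>V. E u w}. (b v :: real)))"
proof -
  have fV: "finite V" using sg unfolding simple_graph_def by auto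
  have sym: "\<And>u v. E u v = E v u" using sg unfolding simple_graph_def by blast
  have "(\<Sum>u\<in>V. b u * (\<Sum>v\<in>{w\<in>V. E u w}. a v)) = (\<Sum>u\<in>V. \<Sum>v\<in>V. if E u v then b u * a v else 0)"
    using fV by (simp add: sum_distrib_left sum.inter_filter if_distrib cong: if_cong)
  also have "\<dots> = (\<Sum>v\<in>V. \<Sum>u\<in>V. if E u v then b u * a v else 0)" by (rule sum.swap)
  also have "\<dots> = (\<Sum>v\<in>V. \<Sum>u\<in>V. if E v u then a v * b u else 0)"
    by (intro sum.cong refl) (auto simp: sym)
  also have "\<dots> = (\<Sum>u\<in>V. a u * (\<Sum>v\<in>{w\<in>V. E u w}. b v))"
    using fV by (simp add: sum_distrib_left sum.inter_filter if_distrib cong: if_cong)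
  finally show ?thesis .
qed

lemma real_eig_of_complex:
  assumes sg: "simple_graph V E"
    and Y0: "\<exists>u\<in>V. Y u \<noteq> 0"
    and Ye: "\<forall>u\<in>V. of_nat (Defs.degree V E u) * Y u + (\<Sum>v\<in>{w\<in>V. E u w}. Y v) = (z::complex) * Y u"
  shows "signless_laplacian_eigenvalue V E (Re z)"
proof -
  define a where "a = (\<lambda>u. Re (Y u))"
  define b where "b = (\<lambda>u. Im (Y u))"
  define d where "d = (\<lambda>u. real (Defs.degree V E u))"
  define N where "N = (\<lambda>u. {w\<in>V. E u w})"
  have ea: "\<And>u. u \<in> V \<Longrightarrow> d u * a u + (\<Sum>v\<in>N u. a v) = Re z * a u - Im z * b u"
  proof -
    fix u assume "u \<in> V"
    then have "Re (of_nat (Defs.degree V E u) * Y u + (\<Sum>v\<in>N u. Y v)) = Re (z * Y u)"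
      using Ye unfolding N_def by simp
    then show "d u * a u + (\<Sum>v\<in>N u. a v) = Re z * a u - Im z * b u"
      unfolding a_def b_def d_def by (simp add: Re_sum)
  qed
  have eb: "\<And>u. u \<in> V \<Longrightarrow> d u * b u + (\<Sum>v\<in>N u. b v) = Im z * a u + Re z * b u"
  proof -
    fix u assume "u \<in> V"
    then have "Im (of_nat (Defs.degree V E u) * Y u + (\<Sum>v\<in>N u. Y v)) = Im (z * Y u)"
      using Ye unfolding N_def by simp
    then show "d u * b u + (\<Sum>v\<in>N u. b v) = Im z * a u + Re z * b u"
      unfolding a_def b_def d_def by (simp add: Im_sum)
  qed
  have s1: "(\<Sum>u\<in>V. b u * (d u * a u + (\<Sum>v\<in>N u. a v))) = (\<Sum>u\<in>V. b u * (Re z * a u - Im z * b u))"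
    using ea by (intro sum.cong) auto
  have s2: "(\<Sum>u\<in>V. a u * (d u * b u + (\<Sum>v\<in>N u. b v))) = (\<Sum>u\<in>V. a u * (Im z * a u + Re z * b u))"
    using eb by (intro sum.cong) auto
  have sw: "(\<Sum>u\<in>V. b u * (\<Sum>v\<in>N u. a v)) = (\<Sum>u\<in>V. a u * (\<Sum>v\<in>N u. b v))"
    unfolding N_def by (rule nbr_swap[OF sg])
  have "(\<Sum>u\<in>V. b u * (d u * a u + (\<Sum>v\<in>N u. a v))) = (\<Sum>u\<in>V. a u * (d u * b u + (\<Sum>v\<in>N u. b v)))"
    using sw by (simp add: distrib_left sum.distrib mult.commute mult.left_commute)
  then have "(\<Sum>u\<in>V. b u * (Re z * a u - Im z * b u)) = (\<Sum>u\<in>V. a u * (Im z * a u + Re z * b u))"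
    using s1 s2 by simp
  then have "Im z * (\<Sum>u\<in>V. (a u)^2 + (b u)^2) = 0"
    by (simp add: algebra_simps sum.distrib sum_subtractf sum_distrib_left power2_eq_square)
  moreover have "(\<Sum>u\<in>V. (a u)^2 + (b u)^2) > 0"
  proof -
    have fV: "finite V" using sg unfolding simple_graph_def by auto
    obtain u where u: "u \<in> V" "Y u \<noteq> 0" using Y0 by auto
    then have "(a u)^2 + (b u)^2 > 0" unfolding a_def b_def
      by (simp add: complex_eq_iff sum_power2_gt_zero_iff)
    then show ?thesis using fV u by (intro sum_pos2[of V u]) auto
  qed
  ultimately have Imz: "Im z = 0" by simp
  show ?thesis
  proof (cases "\<exists>u\<in>V. a u \<noteq> 0")
    case True
    then show ?thesis unfolding signless_laplacian_eigenvalue_def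
      using ea Imz unfolding d_def N_def by (intro exI[of _ a]) auto
  next
    case False
    then have "\<exists>u\<in>V. b u \<noteq> 0" using Y0 unfolding a_def b_def by (auto simp: complex_eq_iff)
    then show ?thesis unfolding signless_laplacian_eigenvalue_def
      using eb Imz unfolding d_def N_def by (intro exI[of _ b]) auto
  qed
qed



lemma rowsum: assumes sg: "simple_graph V E" and u: "u \<in> V"
  shows "(\<Sum>w\<in>V. complex_of_real ((if u = w then real (Defs.degree V E u) else 0) + (if E u w then 1 else 0)) * Y w)
       = of_nat (Defs.degree V E u) * Y u + (\<Sum>v\<in>{w\<in>V. E u w}. Y v)"
proof -
  have fV: "finite V" using sg unfolding simple_graph_def by auto
  have "(\<Sum>w\<in>V. complex_of_real ((if u = w then real (Defs.degree V E u) else 0) + (if E u w then 1 else 0)) * Y w)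
     = (\<Sum>w\<in>V. (if u = w then of_nat (Defs.degree V E u) * Y w else 0) + (if E u w then Y w else 0))"
    by (intro sum.cong refl) (simp add: distrib_right)
  also have "\<dots> = (\<Sum>w\<in>V. (if u = w then of_nat (Defs.degree V E u) * Y w else 0)) + (\<Sum>w\<in>V. if E u w then Y w else 0)"
    by (rule sum.distrib)
  also have "(\<Sum>w\<in>V. (if u = w then of_nat (Defs.degree V E u) * Y w else 0)) = of_nat (Defs.degree V E u) * Y u"
    using fV u by simp
  also have "(\<Sum>w\<in>V. if E u w then Y w else 0) = (\<Sum>v\<in>{w\<in>V. E u w}. Y v)"
    using fV by (simp add: sum.inter_filter)
  finally show ?thesis .
qed

lemma spectrum_ok: assumes sg: "simple_graph V E" and Vne: "V \<noteq> {}"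
  shows "finite {mu. signless_laplacian_eigenvalue V E mu} \<and> {mu. signless_laplacian_eigenvalue V E mu} \<noteq> {}"
proof -
  have fV: "finite V" using sg unfolding simple_graph_def by auto
  define n where "n = card V"
  have n1: "n \<ge> 1" using fV Vne unfolding n_def by (simp add: Suc_leI card_gt_0_iff)
  obtain f where f: "bij_betw f {0..<n} V" using ex_bij_betw_nat_finite[OF fV] unfolding n_def by blast
  define g where "g = inv_into {0..<n} f"
  have gf: "\<And>i. i < n \<Longrightarrow> g (f i) = i" unfolding g_def using f
    by (simp add: bij_betw_inv_into_left)
  have fg: "\<And>w. w \<in> V \<Longrightarrow> f (g w) = w" unfolding g_def using f
    by (simp add: bij_betw_inv_into_right)
  have gV: "\<And>w. w \<in> V \<Longrightarrow> g w < n" unfolding g_def using f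
    by (metis atLeastLessThan_iff bij_betw_def inv_into_into)
  have fV': "\<And>i. i < n \<Longrightarrow> f i \<in> V" using f by (auto simp: bij_betw_def)
  define qe where "qe = (\<lambda>u w. (if u = w then real (Defs.degree V E u) else 0) + (if E u w then 1 else (0::real)))"
  define A :: "complex mat" where "A = mat n n (\<lambda>(i,j). complex_of_real (qe (f i) (f j)))"
  have A: "A \<in> carrier_mat n n" unfolding A_def by simp
  have mv: "\<And>v i. v \<in> carrier_vec n \<Longrightarrow> i < n \<Longrightarrow>
     (A *\<^sub>v v) $ i = (\<Sum>w\<in>V. complex_of_real (qe (f i) w) * v $ (g w))"
  proof -
    fix v :: "complex vec" and i assume v: "v \<in> carrier_vec n" and i: "i < n"
    have "(A *\<^sub>v v) $ i = (\<Sum>j\<in>{0..<n}. complex_of_real (qe (f i) (f j)) * v $ j)"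
      using v i unfolding A_def by (simp add: scalar_prod_def)
    also have "\<dots> = (\<Sum>j\<in>{0..<n}. complex_of_real (qe (f i) (f j)) * v $ (g (f j)))"
      using gf by (intro sum.cong) auto
    also have "\<dots> = (\<Sum>w\<in>V. complex_of_real (qe (f i) w) * v $ (g w))"
      by (rule sum.reindex_bij_betw[OF f, where g = "\<lambda>w. complex_of_real (qe (f i) w) * v $ (g w)"])
    finally show "(A *\<^sub>v v) $ i = (\<Sum>w\<in>V. complex_of_real (qe (f i) w) * v $ (g w))" .
  qed
  have toA: "\<And>z Y. (\<exists>u\<in>V. Y u \<noteq> 0) \<Longrightarrow>
      (\<forall>u\<in>V. of_nat (Defs.degree V E u) * Y u + (\<Sum>v\<in>{w\<in>V. E u w}. Y v) = (z::complex) * Y u)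
      \<Longrightarrow> eigenvalue A z"
  proof -
    fix z :: complex and Y assume Y0: "\<exists>u\<in>V. Y u \<noteq> 0"
      and Ye: "\<forall>u\<in>V. of_nat (Defs.degree V E u) * Y u + (\<Sum>v\<in>{w\<in>V. E u w}. Y v) = z * Y u"
    define v where "v = vec n (\<lambda>i. Y (f i))"
    have vc: "v \<in> carrier_vec n" unfolding v_def by simp
    have vg: "\<And>w. w \<in> V \<Longrightarrow> v $ (g w) = Y w" unfolding v_def using gV fg by simp
    have "v \<noteq> 0\<^sub>v n"
    proof
      assume "v = 0\<^sub>v n"
      obtain u where u: "u \<in> V" "Y u \<noteq> 0" using Y0 by auto
      have "v $ (g u) = 0" using \<open>v = 0\<^sub>v n\<close> gV[OF u(1)] by simp
      then show False using vg[OF u(1)] u by simp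
    qed
    moreover have "A *\<^sub>v v = z \<cdot>\<^sub>v v"
    proof (rule eq_vecI)
      fix i assume "i < dim_vec (z \<cdot>\<^sub>v v)"
      then have i: "i < n" using vc by simp
      have "(A *\<^sub>v v) $ i = (\<Sum>w\<in>V. complex_of_real (qe (f i) w) * Y w)"
      proof -
        have "(\<Sum>w\<in>V. complex_of_real (qe (f i) w) * v $ (g w)) = (\<Sum>w\<in>V. complex_of_real (qe (f i) w) * Y w)"
          by (intro sum.cong refl) (simp add: vg)
        then show ?thesis using mv[OF vc i] by simp
      qed
      also have "\<dots> = z * Y (f i)" using rowsum[OF sg fV'[OF i], of Y] Ye fV'[OF i] unfolding qe_def by simp
      finally show "(A *\<^sub>v v) $ i = (z \<cdot>\<^sub>v v) $ i" using i unfolding v_def by simp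
    qed (use A vc in simp)
    ultimately show "eigenvalue A z" unfolding eigenvalue_def eigenvector_def using A vc by auto
  qed
  have fromA: "\<And>z. eigenvalue A z \<Longrightarrow> \<exists>Y. (\<exists>u\<in>V. Y u \<noteq> 0) \<and>
      (\<forall>u\<in>V. of_nat (Defs.degree V E u) * Y u + (\<Sum>v\<in>{w\<in>V. E u w}. Y v) = z * Y u)"
  proof -
    fix z assume "eigenvalue A z"
    then obtain v where vc: "v \<in> carrier_vec n" and v0: "v \<noteq> 0\<^sub>v n" and ve: "A *\<^sub>v v = z \<cdot>\<^sub>v v"
      unfolding eigenvalue_def eigenvector_def using A by auto
    define Y where "Y = (\<lambda>w. v $ (g w))"
    have "\<exists>u\<in>V. Y u \<noteq> 0"
    proof (rule ccontr)
      assume "\<not> (\<exists>u\<in>V. Y u \<noteq> 0)"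
      then have "\<And>i. i < n \<Longrightarrow> v $ i = 0"
      proof -
        fix i assume i: "i < n"
        have "Y (f i) = 0" using \<open>\<not> (\<exists>u\<in>V. Y u \<noteq> 0)\<close> fV'[OF i] by blast
        then show "v $ i = 0" unfolding Y_def using gf[OF i] by simp
      qed
      then have "v = 0\<^sub>v n" using vc by (intro eq_vecI) auto
      then show False using v0 by simp
    qed
    moreover have "\<forall>u\<in>V. of_nat (Defs.degree V E u) * Y u + (\<Sum>v\<in>{w\<in>V. E u w}. Y v) = z * Y u"
    proof
      fix u assume u: "u \<in> V"
      define i where "i = g u"
      have i: "i < n" "f i = u" using gV fg u unfolding i_def by auto
      have "(A *\<^sub>v v) $ i = z * v $ i" using ve vc i by simp
      then have "(\<Sum>w\<in>V. complex_of_real (qe u w) * Y w) = z * Y u"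
        using mv[OF vc i(1)] i unfolding Y_def i_def by simp
      then show "of_nat (Defs.degree V E u) * Y u + (\<Sum>v\<in>{w\<in>V. E u w}. Y v) = z * Y u"
        using rowsum[OF sg u, of Y] unfolding qe_def by simp
    qed
    ultimately show "\<exists>Y. (\<exists>u\<in>V. Y u \<noteq> 0) \<and>
      (\<forall>u\<in>V. of_nat (Defs.degree V E u) * Y u + (\<Sum>v\<in>{w\<in>V. E u w}. Y v) = z * Y u)" by blast
  qed
  have dm: "Polynomial.degree (char_poly A) = n" "coeff (char_poly A) n = 1"
    using degree_monic_char_poly[OF A] by auto
  have p0: "char_poly A \<noteq> 0" using dm by auto
  have fin: "finite {mu. signless_laplacian_eigenvalue V E mu}"
  proof -
    have "{mu. signless_laplacian_eigenvalue V E mu} \<subseteq> Re ` {z. poly (char_poly A) z = 0}"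
    proof
      fix mu assume "mu \<in> {mu. signless_laplacian_eigenvalue V E mu}"
      then obtain x where x0: "\<exists>u\<in>V. x u \<noteq> 0" and xe: "\<forall>u\<in>V. real (Defs.degree V E u) * x u + (\<Sum>v\<in>{w\<in>V. E u w}. x v) = mu * x u"
        unfolding signless_laplacian_eigenvalue_def by blast
      have "eigenvalue A (complex_of_real mu)"
      proof (rule toA[of "\<lambda>u. complex_of_real (x u)"])
        show "\<exists>u\<in>V. complex_of_real (x u) \<noteq> 0" using x0 by simp
        show "\<forall>u\<in>V. of_nat (Defs.degree V E u) * complex_of_real (x u) + (\<Sum>v\<in>{w\<in>V. E u w}. complex_of_real (x v)) = complex_of_real mu * complex_of_real (x u)"
        proof
          fix u assume "u \<in> V"
          then have "complex_of_real (real (Defs.degree V E u) * x u + (\<Sum>v\<in>{w\<in>V. E u w}. x v)) = complex_of_real (mu * x u)"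
            using xe by simp
          then show "of_nat (Defs.degree V E u) * complex_of_real (x u) + (\<Sum>v\<in>{w\<in>V. E u w}. complex_of_real (x v)) = complex_of_real mu * complex_of_real (x u)"
            by (simp add: of_real_sum)
        qed
      qed
      then have "poly (char_poly A) (complex_of_real mu) = 0" using eigenvalue_root_char_poly[OF A] by simp
      then show "mu \<in> Re ` {z. poly (char_poly A) z = 0}" by (intro image_eqI[of _ _ "complex_of_real mu"]) auto
    qed
    moreover have "finite (Re ` {z. poly (char_poly A) z = 0})" using poly_roots_finite[OF p0] by simp
    ultimately show ?thesis by (rule finite_subset)
  qed
  have ne: "{mu. signless_laplacian_eigenvalue V E mu} \<noteq> {}"
  proof -
    have "\<not> constant (poly (char_poly A))" using dm n1 by (simp add: constant_degree)
    then obtain z where "poly (char_poly A) z = 0" using fundamental_theorem_of_algebra by blast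
    then have "eigenvalue A z" using eigenvalue_root_char_poly[OF A] by simp
    then obtain Y where "\<exists>u\<in>V. Y u \<noteq> 0" "\<forall>u\<in>V. of_nat (Defs.degree V E u) * Y u + (\<Sum>v\<in>{w\<in>V. E u w}. Y v) = z * Y u"
      using fromA by blast
    then have "signless_laplacian_eigenvalue V E (Re z)" by (rule real_eig_of_complex[OF sg])
    then show ?thesis by blast
  qed
  show ?thesis using fin ne by blast
qed


theorem lemma2p4:
  fixes V :: "'a set" and E :: "'a \<Rightarrow> 'a \<Rightarrow> bool"
  assumes "simple_graph V E"
    and "connected_graph V E"
    and "card V \<ge> 4"
    and "num_edges V E \<ge> card V"
    and "randic V E > sqrt (real (card V) - 1)
           + (2 * real (num_edges V E) - 2 * real (card V) + 2)
             / (real (card V) * sqrt (real (card V) - 1))"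
  shows "signless_spectral_radius V E / randic V E < real (card V) / sqrt (real (card V) - 1)"
proof -
  note sg = assms(1) and cg = assms(2)
  define n where "n = real (card V)"
  define m where "m = real (num_edges V E)"
  define k where "k = n - 1"
  define s where "s = sqrt k"
  define R where "R = randic V E"
  have n4: "n \<ge> 4" using assms(3) unfolding n_def by simp
  have mn: "m \<ge> n" using assms(4) unfolding n_def m_def by simp
  have k0: "k > 0" using n4 unfolding k_def by simp
  have s0: "s > 0" using k0 unfolding s_def by simp
  have ss: "s * s = k" using k0 unfolding s_def by simp
  have Vne: "V \<noteq> {}" using assms(3) by auto
  have c2: "card V \<ge> 2" using assms(3) by simp
  define S where "S = {mu. signless_laplacian_eigenvalue V E mu}"
  have "finite S" "S \<noteq> {}" using spectrum_ok[OF sg Vne] unfolding S_def by auto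
  then have "Max S \<in> S" by (rule Max_in)
  then have q: "signless_spectral_radius V E \<le> (2 * m - n + 1) / k + k"
    using eig_bound[OF sg cg c2] unfolding signless_spectral_radius_def S_def m_def n_def k_def by simp
  define B where "B = (2 * m - n + 1) / k + k"
  have hyp: "R > s + (2 * m - 2 * n + 2) / (n * s)" using assms(5) unfolding R_def s_def k_def n_def m_def by simp
  have eq: "s + (2 * m - 2 * n + 2) / (n * s) = B * s / n"
  proof -
    have e1: "s + (2 * m - 2 * n + 2) / (n * s) = (n * (s * s) + 2 * m - 2 * n + 2) / (n * s)"
      using s0 n4 by (simp add: field_simps)
    have e2: "B * s / n = ((2 * m - n + 1) + k * k) * s / (k * n)" unfolding B_def using k0 by (simp add: field_simps)
    have e3: "((2 * m - n + 1) + k * k) * s / (s * s * n) = ((2 * m - n + 1) + k * k) / (n * s)"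
      using s0 n4 by (simp add: field_simps)
    have e4: "n * k + 2 * m - 2 * n + 2 = (2 * m - n + 1) + k * k" unfolding k_def by (simp add: algebra_simps)
    from e1 e2 e3 e4 ss show ?thesis by simp
  qed
  have Bpos: "B > 0" unfolding B_def using k0 mn n4 by (simp add: add_pos_pos)
  have Rgt: "R > B * s / n" using hyp eq by simp
  have Rpos: "R > 0" using Rgt Bpos s0 n4 by (smt (verit) divide_pos_pos mult_pos_pos)
  have "B < R * n / s" using Rgt s0 n4 by (simp add: field_simps)
  then have "signless_spectral_radius V E < R * n / s" using q unfolding B_def by simp
  then have "signless_spectral_radius V E / R < n / s" using Rpos by (simp add: field_simps)
  then show ?thesis unfolding R_def n_def s_def k_def by simp
qed

end
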